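(* Let $L$ be the unnormalized Laplacian of a simple undirected network with $M$ edges, with simple eigenvalues $\lambda_1,\dots,\lambda_N$ and orthonormal eigenvectors $\bm v^{(1)},\dots,\bm v^{(N)}$. Suppose the network is modified by adding (resp. removing) an unweighted edge $(p,q)$, encoded by the Laplacian perturbation matrix $\Delta L^{(pq)}$ with $\Delta L^{(pq)}_{pp}=\Delta L^{(pq)}_{qq}=\pm1$, $\Delta L^{(pq)}_{pq}=\Delta L^{(pq)}_{qp}=\mp1$, and all other entries $0$ (upper sign for addition, lower sign for removal). Let $L(\epsilon)=L+\epsilon\,\Delta L^{(pq)}$, assume its eigenvalues $\lambda_i(\epsilon)$ are simple, and let $h(\epsilon)=-\sum_i\frac{\lambda_i(\epsilon)}{2M}\log_2\frac{\lambda_i(\epsilon)}{2M}$. Then $h(\epsilon)=h(0)+\epsilon h'(0)+\mathcal{O}(\epsilon^2)$ with $$h'(0)=-\frac{1}{2M}\sum_{i=1}^N\pm\left(\bm v^{(i)}_p-\bm v^{(i)}_q\right)^2\left(\log_2\frac{\lambda_i}{2M}+\frac{1}{\ln 2}\right),$$ where $\pm$ is $+$ for addition and $-$ for removal.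
   Context: For a simple undirected unweighted network with adjacency matrix $A$ and degree matrix $D$, the unnormalized Laplacian is $L=D-A$. The von Neumann entropy of a network with $M$ edges and Laplacian eigenvalues $\lambda_i$ is $-\sum_i\frac{\lambda_i}{2M}\log_2\frac{\lambda_i}{2M}$ with $0\log_2 0=0$. *)

theory Defs
  imports "HOL-Analysis.Analysis" "HOL-Library.Landau_Symbols"
begin

definition simple_adjacency :: "real^'n^'n \<Rightarrow> bool" where
  "simple_adjacency A \<longleftrightarrow>
     (\<forall>i j. A$i$j = 0 \<or> A$i$j = 1) \<and> (\<forall>i j. A$i$j = A$j$i) \<and> (\<forall>i. A$i$i = 0)"

definition laplacian :: "real^'n^'n \<Rightarrow> real^'n^'n" where
  "laplacian A = (\<chi> i j. if i = j then (\<Sum>k\<in>UNIV. A$i$k) else 0) - A"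

definition num_edges :: "real^'n^'n \<Rightarrow> real" where
  "num_edges A = (\<Sum>i\<in>UNIV. \<Sum>j\<in>UNIV. A$i$j) / 2"

text \<open>Laplacian perturbation matrix for adding (s = 1) or removing (s = -1) edge (p,q).\<close>
definition edge_perturbation :: "'n \<Rightarrow> 'n \<Rightarrow> real \<Rightarrow> real^'n^'n" where
  "edge_perturbation p q s = (\<chi> i j.
     if (i = p \<and> j = p) \<or> (i = q \<and> j = q) then s
     else if (i = p \<and> j = q) \<or> (i = q \<and> j = p) then - s else 0)"

definition eigenvalues :: "real^'n^'n \<Rightarrow> real set" where
  "eigenvalues L = {c. \<exists>v. v \<noteq> 0 \<and> L *v v = c *\<^sub>R v}"

definition eigenspace :: "real^'n^'n \<Rightarrow> real \<Rightarrow> (real^'n) set" where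
  "eigenspace L c = {v. L *v v = c *\<^sub>R v}"

text \<open>Von Neumann entropy  - sum_i (lambda_i / 2M) log2 (lambda_i / 2M), eigenvalues counted with
  (geometric = algebraic, for symmetric L) multiplicity; 0 log 0 = 0 holds since the factor is 0.\<close>
definition vn_entropy :: "real \<Rightarrow> real^'n^'n \<Rightarrow> real" where
  "vn_entropy M L = - (\<Sum>c\<in>eigenvalues L.
      real (dim (eigenspace L c)) * ((c / (2 * M)) * log 2 (c / (2 * M))))"

end

theory Submission
  imports Defs
begin
lemma orth_expand:
  fixes u :: "'n::finite \<Rightarrow> real^'n"
  assumes orth: "\<And>i j. u i \<bullet> u j = (if i = j then 1 else 0)"
  shows "x = (\<Sum>k\<in>UNIV. (x \<bullet> u k) *\<^sub>R u k)"
proof -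
  define U :: "real^'n^'n" where "U = (\<chi> k j. u k $ j)"
  have inn: "\<And>k l. (\<Sum>j\<in>UNIV. u k $ j * u l $ j) = u k \<bullet> u l" by (simp add: inner_vec_def)
  have "U ** transpose U = mat 1"
    by (simp add: U_def matrix_matrix_mult_def transpose_def mat_def vec_eq_iff inn orth)
  hence "transpose U ** U = mat 1" using matrix_left_right_inverse by blast
  hence T: "\<And>i j. (\<Sum>k\<in>UNIV. u k $ i * u k $ j) = (if i = j then 1 else 0)"
    by (auto simp add: U_def matrix_matrix_mult_def transpose_def mat_def vec_eq_iff)
  show ?thesis
  proof (subst vec_eq_iff, intro allI)
    fix j
    have "(\<Sum>k\<in>UNIV. (x \<bullet> u k) *\<^sub>R u k) $ j = (\<Sum>k\<in>UNIV. (\<Sum>i\<in>UNIV. x$i * u k $ i) * u k $ j)"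
      by (simp add: inner_vec_def)
    also have "\<dots> = (\<Sum>k\<in>UNIV. \<Sum>i\<in>UNIV. x$i * (u k $ i * u k $ j))"
      by (simp add: sum_distrib_right mult.assoc)
    also have "\<dots> = (\<Sum>i\<in>UNIV. \<Sum>k\<in>UNIV. x$i * (u k $ i * u k $ j))"
      by (rule sum.swap)
    also have "\<dots> = (\<Sum>i\<in>UNIV. x$i * (\<Sum>k\<in>UNIV. u k $ i * u k $ j))"
      by (simp add: sum_distrib_left)
    also have "\<dots> = (\<Sum>i\<in>UNIV. if i = j then x$i else 0)" by (rule sum.cong) (auto simp: T)
    also have "\<dots> = x $ j" by simp
    finally show "x $ j = (\<Sum>k\<in>UNIV. (x \<bullet> u k) *\<^sub>R u k) $ j" by simp
  qed
qed

lemma parseval: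
  fixes u :: "'n::finite \<Rightarrow> real^'n"
  assumes orth: "\<And>i j. u i \<bullet> u j = (if i = j then 1 else 0)"
  shows "x \<bullet> x = (\<Sum>k\<in>UNIV. (x \<bullet> u k)^2)"
proof -
  have e: "(\<Sum>k\<in>UNIV. (x \<bullet> u k) *\<^sub>R u k) = x" by (rule orth_expand[OF orth, symmetric])
  have "x \<bullet> x = x \<bullet> (\<Sum>k\<in>UNIV. (x \<bullet> u k) *\<^sub>R u k)" by (simp only: e)
  also have "\<dots> = (\<Sum>k\<in>UNIV. (x \<bullet> u k)^2)" by (simp add: inner_sum_right power2_eq_square)
  finally show ?thesis .
qed

lemma sym_dot:
  fixes S :: "real^'n::finite^'n"
  assumes "transpose S = S"
  shows "(S *v x) \<bullet> y = x \<bullet> (S *v y)"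
proof -
  have "(S *v x) \<bullet> y = (\<Sum>i\<in>UNIV. (\<Sum>j\<in>UNIV. S$i$j * x$j) * y$i)"
    by (simp add: inner_vec_def matrix_vector_mult_def)
  also have "\<dots> = (\<Sum>j\<in>UNIV. x$j * (\<Sum>i\<in>UNIV. S$j$i * y$i))"
  proof -
    have sy: "\<And>i j. S$i$j = S$j$i" using assms by (metis transpose_def vec_lambda_beta)
    have "(\<Sum>i\<in>UNIV. (\<Sum>j\<in>UNIV. S$i$j * x$j) * y$i) = (\<Sum>i\<in>UNIV. \<Sum>j\<in>UNIV. x$j * (S$j$i * y$i))"
      by (simp add: sum_distrib_right sum_distrib_left sy mult_ac)
    also have "\<dots> = (\<Sum>j\<in>UNIV. \<Sum>i\<in>UNIV. x$j * (S$j$i * y$i))" by (rule sum.swap)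
    also have "\<dots> = (\<Sum>j\<in>UNIV. x$j * (\<Sum>i\<in>UNIV. S$j$i * y$i))" by (simp add: sum_distrib_left)
    finally show ?thesis .
  qed
  also have "\<dots> = x \<bullet> (S *v y)" by (simp add: inner_vec_def matrix_vector_mult_def)
  finally show ?thesis .
qed


lemma sum_single:
  assumes "finite A" "i \<in> A" "\<And>k. k \<in> A \<Longrightarrow> k \<noteq> i \<Longrightarrow> f k = 0"
  shows "sum f A = f i"
proof -
  have "sum f A = f i + sum f (A - {i})" by (rule sum.remove[OF assms(1,2)])
  also have "sum f (A - {i}) = 0" using assms(3) by (intro sum.neutral) auto
  finally show ?thesis by simp
qed

lemma orth_zero:
  fixes u :: "'n::finite \<Rightarrow> real^'n"
  assumes orth: "\<And>i j. u i \<bullet> u j = (if i = j then 1 else 0)"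
    and "\<And>k. z \<bullet> u k = 0"
  shows "z = 0"
proof -
  have "z = (\<Sum>k\<in>UNIV. (z \<bullet> u k) *\<^sub>R u k)" by (rule orth_expand[OF orth])
  also have "\<dots> = 0" by (simp add: assms(2))
  finally show ?thesis .
qed

lemma orth_single:
  fixes u :: "'n::finite \<Rightarrow> real^'n"
  assumes orth: "\<And>i j. u i \<bullet> u j = (if i = j then 1 else 0)"
    and "\<And>k. k \<noteq> i \<Longrightarrow> z \<bullet> u k = 0"
  shows "z = (z \<bullet> u i) *\<^sub>R u i"
proof -
  have "z = (\<Sum>k\<in>UNIV. (z \<bullet> u k) *\<^sub>R u k)" by (rule orth_expand[OF orth])
  also have "\<dots> = (z \<bullet> u i) *\<^sub>R u i" by (rule sum_single) (auto simp: assms(2))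
  finally show ?thesis .
qed

lemma eig_coord:
  fixes S :: "real^'n::finite^'n"
  assumes sym: "transpose S = S" and eig: "S *v w = c *\<^sub>R w"
  shows "(S *v x) \<bullet> w = c * (x \<bullet> w)"
  using sym_dot[OF sym, of x w] eig by simp

lemma eigenvalues_range:
  fixes S :: "real^'n::finite^'n" and u :: "'n \<Rightarrow> real^'n"
  assumes orth: "\<And>i j. u i \<bullet> u j = (if i = j then 1 else 0)"
    and eig: "\<And>k. S *v u k = m k *\<^sub>R u k" and sym: "transpose S = S"
  shows "eigenvalues S = range m"
proof
  show "range m \<subseteq> eigenvalues S"
  proof
    fix c assume "c \<in> range m"
    then obtain k where k: "c = m k" by auto
    have "u k \<noteq> 0" using orth[of k k] by auto
    thus "c \<in> eigenvalues S" using eig[of k] k unfolding eigenvalues_def by auto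
  qed
  show "eigenvalues S \<subseteq> range m"
  proof
    fix c assume "c \<in> eigenvalues S"
    then obtain x where x: "x \<noteq> 0" "S *v x = c *\<^sub>R x" unfolding eigenvalues_def by auto
    have "\<exists>k. x \<bullet> u k \<noteq> 0" using orth_zero[OF orth, of x] x(1) by blast
    then obtain k where k: "x \<bullet> u k \<noteq> 0" by blast
    have "c * (x \<bullet> u k) = m k * (x \<bullet> u k)"
      using eig_coord[OF sym eig[of k], of x] x(2) by simp
    hence "c = m k" using k by simp
    thus "c \<in> range m" by simp
  qed
qed

lemma eigenspace_dim:
  fixes S :: "real^'n::finite^'n" and u :: "'n \<Rightarrow> real^'n"
  assumes orth: "\<And>i j. u i \<bullet> u j = (if i = j then 1 else 0)"
    and eig: "\<And>k. S *v u k = m k *\<^sub>R u k" and sym: "transpose S = S" and inj: "inj m"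
  shows "dim (eigenspace S (m k)) = 1"
proof -
  have "eigenspace S (m k) = span {u k}"
  proof
    show "eigenspace S (m k) \<subseteq> span {u k}"
    proof
      fix x assume "x \<in> eigenspace S (m k)"
      hence x: "S *v x = m k *\<^sub>R x" unfolding eigenspace_def by auto
      have "\<And>l. l \<noteq> k \<Longrightarrow> x \<bullet> u l = 0"
      proof -
        fix l assume "l \<noteq> k"
        hence ne: "m l \<noteq> m k" using inj by (auto dest: injD)
        have "m k * (x \<bullet> u l) = m l * (x \<bullet> u l)"
          using eig_coord[OF sym eig[of l], of x] x by simp
        thus "x \<bullet> u l = 0" using ne by simp
      qed
      hence "x = (x \<bullet> u k) *\<^sub>R u k" by (rule orth_single[OF orth])
      thus "x \<in> span {u k}" unfolding span_singleton by (metis rangeI)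
    qed
    show "span {u k} \<subseteq> eigenspace S (m k)"
      unfolding span_singleton eigenspace_def by (auto simp: matrix_vector_mult_scaleR eig)
  qed
  moreover have "u k \<noteq> 0" using orth[of k k] by auto
  ultimately have "dim (eigenspace S (m k)) = dim {u k}" by (simp only: dim_span)
  also have "dim {u k} = 1" using \<open>u k \<noteq> 0\<close> by (simp add: dim_insert span_empty)
  finally show ?thesis .
qed

lemma eigbasis:
  fixes S :: "real^'n::finite^'n"
  assumes sym: "transpose S = S" and card: "card (eigenvalues S) = CARD('n)"
  obtains u :: "'n \<Rightarrow> real^'n" and m :: "'n \<Rightarrow> real" where "\<And>i j. u i \<bullet> u j = (if i = j then 1 else 0)" "\<And>k. S *v u k = m k *\<^sub>R u k" "inj m"
proof -
  have "CARD('n) > 0" by simp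
  hence fin: "finite (eigenvalues S)" using card card.infinite by fastforce
  obtain m where bm: "bij_betw m (UNIV::'n set) (eigenvalues S)"
    using finite_same_card_bij[OF finite[of UNIV] fin card[symmetric]] by blast
  have "\<forall>k. \<exists>w. w \<noteq> 0 \<and> S *v w = m k *\<^sub>R w" using bm unfolding eigenvalues_def bij_betw_def by auto
  then obtain w where w: "\<And>k. w k \<noteq> 0" "\<And>k. S *v w k = m k *\<^sub>R w k" by metis
  define u where "u k = (1 / norm (w k)) *\<^sub>R w k" for k
  have eig: "\<And>k. S *v u k = m k *\<^sub>R u k" by (simp add: u_def matrix_vector_mult_scaleR w(2))
  have n1: "\<And>k. u k \<bullet> u k = 1" using w(1) by (simp add: u_def dot_square_norm power2_eq_square)
  have inj: "inj m" using bm bij_betw_imp_inj_on by blast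
  have "\<And>i j. u i \<bullet> u j = (if i = j then 1 else 0)"
  proof -
    fix i j
    show "u i \<bullet> u j = (if i = j then 1 else 0)"
    proof (cases "i = j")
      case True thus ?thesis using n1 by simp
    next
      case False
      hence ne: "m i \<noteq> m j" using inj by (auto dest: injD)
      have "m i * (u i \<bullet> u j) = m j * (u i \<bullet> u j)"
        using sym_dot[OF sym, of "u i" "u j"] eig by simp
      thus ?thesis using ne False by simp
    qed
  qed
  note orth = this
  show ?thesis by (rule that[of u m, OF orth eig inj])
qed

lemma approx_eig:
  fixes S :: "real^'n::finite^'n" and u :: "'n \<Rightarrow> real^'n"
  assumes orth: "\<And>i j. u i \<bullet> u j = (if i = j then 1 else 0)"
    and eig: "\<And>k. S *v u k = m k *\<^sub>R u k" and sym: "transpose S = S" and x: "x \<noteq> 0"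
  shows "\<exists>k. \<bar>m k - t\<bar> * norm x \<le> norm (S *v x - t *\<^sub>R x)"
proof (rule ccontr)
  assume "\<not> ?thesis"
  hence lt: "\<And>k. norm (S *v x - t *\<^sub>R x) < \<bar>m k - t\<bar> * norm x" by (simp add: not_le)
  define r where "r = S *v x - t *\<^sub>R x"
  have ru: "\<And>k. r \<bullet> u k = (m k - t) * (x \<bullet> u k)"
    using eig_coord[OF sym eig] by (simp add: r_def inner_diff_left algebra_simps)
  have nr: "(norm r)^2 = (\<Sum>k\<in>UNIV. ((m k - t) * (x \<bullet> u k))^2)"
    using parseval[OF orth, of r] by (simp add: power2_norm_eq_inner ru)
  have nx: "(norm x)^2 = (\<Sum>k\<in>UNIV. (x \<bullet> u k)^2)"
    using parseval[OF orth, of x] by (simp add: power2_norm_eq_inner)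
  obtain k0 where k0: "x \<bullet> u k0 \<noteq> 0" using orth_zero[OF orth, of x] x by blast
  have "(\<Sum>k\<in>UNIV. (x \<bullet> u k)^2 * (norm r)^2) < (\<Sum>k\<in>UNIV. (x \<bullet> u k)^2 * (\<bar>m k - t\<bar> * norm x)^2)"
  proof (rule sum_strict_mono_ex1)
    have sq: "\<And>k. (norm r)^2 < (\<bar>m k - t\<bar> * norm x)^2"
      using lt unfolding r_def[symmetric] by (intro power_strict_mono) auto
    show "\<forall>k\<in>UNIV. (x \<bullet> u k)^2 * (norm r)^2 \<le> (x \<bullet> u k)^2 * (\<bar>m k - t\<bar> * norm x)^2"
    proof
      fix k show "(x \<bullet> u k)^2 * (norm r)^2 \<le> (x \<bullet> u k)^2 * (\<bar>m k - t\<bar> * norm x)^2"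
        by (rule mult_left_mono[OF less_imp_le[OF sq]]) simp
    qed
    show "\<exists>k\<in>UNIV. (x \<bullet> u k)^2 * (norm r)^2 < (x \<bullet> u k)^2 * (\<bar>m k - t\<bar> * norm x)^2"
      using sq k0 by (intro bexI[of _ k0] mult_strict_left_mono) auto
  qed simp
  also have "\<dots> = (norm x)^2 * (norm r)^2"
    by (simp add: nr nx sum_distrib_left sum_distrib_right power_mult_distrib mult_ac)
  also have "\<dots> = (\<Sum>k\<in>UNIV. (x \<bullet> u k)^2 * (norm r)^2)"
    by (simp add: nx sum_distrib_right)
  finally show False by simp
qed

lemma rlogr_bound:
  fixes r :: real assumes r: "r > 0"
  shows "0 \<le> r * ln r - r + 1" "r * ln r - r + 1 \<le> (r - 1)^2"
proof -
  have "ln (1/r) \<le> 1/r - 1" using r by (intro ln_le_minus_one) simp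
  hence "- ln r \<le> 1/r - 1" using r by (simp add: ln_div)
  hence "r * (- ln r) \<le> r * (1/r - 1)" using r by (intro mult_left_mono) auto
  thus "0 \<le> r * ln r - r + 1" using r by (simp add: algebra_simps)
  have "ln r \<le> r - 1" using r by (rule ln_le_minus_one)
  hence "r * ln r \<le> r * (r - 1)" using r by (intro mult_left_mono) auto
  thus "r * ln r - r + 1 \<le> (r - 1)^2" by (simp add: power2_eq_square algebra_simps)
qed

lemma xlogx_taylor:
  fixes N lam x :: real
  assumes lam: "lam \<noteq> 0" and close: "\<bar>x - lam\<bar> < \<bar>lam\<bar>"
  shows "\<bar>(x/N) * log 2 (x/N) - (lam/N) * log 2 (lam/N) - (1/N) * (log 2 (lam/N) + 1/ln 2) * (x - lam)\<bar>
         \<le> (\<bar>1/N\<bar> / ln 2 / \<bar>lam\<bar>) * (x - lam)^2"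
proof (cases "N = 0")
  case True thus ?thesis by simp
next
  case N: False
  define r where "r = x / lam"
  have r: "r > 0" using lam close unfolding r_def
    by (cases "lam > 0") (auto simp: abs_if split: if_splits intro: divide_pos_pos divide_neg_neg)
  have xr: "x = r * lam" using lam by (simp add: r_def)
  have L2: "ln 2 > (0::real)" by simp
  have lnx: "ln (x/N) = ln r + ln (lam/N)"
  proof -
    have e: "x/N = r * (lam/N)" by (simp add: xr)
    have "lam / N \<noteq> 0" using lam N by simp
    thus ?thesis unfolding e using r ln_mult[of r "lam/N"] by simp
  qed
  define E where "E = (x/N) * log 2 (x/N) - (lam/N) * log 2 (lam/N) - (1/N) * (log 2 (lam/N) + 1/ln 2) * (x - lam)"
  have E: "E = lam / (N * ln 2) * (r * ln r - r + 1)"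
    unfolding E_def log_def lnx using N L2 lam by (simp add: xr field_simps)
  have "\<bar>E\<bar> = \<bar>lam\<bar> / (\<bar>N\<bar> * ln 2) * (r * ln r - r + 1)"
    using rlogr_bound(1)[OF r] L2 by (simp add: E abs_mult abs_divide)
  also have "\<dots> \<le> \<bar>lam\<bar> / (\<bar>N\<bar> * ln 2) * (r - 1)^2"
    using rlogr_bound(2)[OF r] L2 by (intro mult_left_mono) auto
  also have "(r - 1)^2 = (x - lam)^2 / lam^2" using lam by (simp add: r_def field_simps)
  also have "\<bar>lam\<bar> / (\<bar>N\<bar> * ln 2) * ((x - lam)^2 / lam^2) = (\<bar>1/N\<bar> / ln 2 / \<bar>lam\<bar>) * (x - lam)^2"
  proof -
    have l2: "lam^2 = \<bar>lam\<bar> * \<bar>lam\<bar>" by (simp add: power2_eq_square)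
    have "\<bar>lam\<bar> \<noteq> 0" "\<bar>N\<bar> \<noteq> 0" using lam N by auto
    thus ?thesis unfolding l2 using L2 by (simp add: field_simps)
  qed
  finally show ?thesis unfolding E_def .
qed
lemma vec_id:
  fixes a y c d :: "'a::real_vector"
  shows "(lam *\<^sub>R a + e *\<^sub>R (lam *\<^sub>R y - c + bb *\<^sub>R a) + e *\<^sub>R c + (e*e) *\<^sub>R d) - (lam + e*bb) *\<^sub>R (a + e *\<^sub>R y) = (e^2) *\<^sub>R (d - bb *\<^sub>R y)"
  by (simp add: algebra_simps power2_eq_square)
lemma quot_bound:
  fixes y H H0 D K :: real
  assumes y: "y \<noteq> 0" and b: "\<bar>H - (H0 + y*D)\<bar> \<le> K*y^2"
  shows "\<bar>(H - H0)/y - D\<bar> \<le> K * \<bar>y\<bar>"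
proof -
  have "(H - H0)/y - D = (H - (H0 + y*D)) / y" using y by (simp add: field_simps)
  hence "\<bar>(H - H0)/y - D\<bar> = \<bar>H - (H0 + y*D)\<bar> / \<bar>y\<bar>" by (simp add: abs_divide)
  also have "\<dots> \<le> K*y^2 / \<bar>y\<bar>" using b y by (simp add: divide_right_mono)
  also have "K*y^2 / \<bar>y\<bar> = K * \<bar>y\<bar>"
    using y by (cases "y > 0") (auto simp: power2_eq_square abs_of_pos abs_of_neg)
  finally show ?thesis .
qed

lemma deriv_from_bound:
  fixes h :: "real \<Rightarrow> real"
  assumes bound: "\<forall>\<^sub>F e in nhds 0. \<bar>h e - (h 0 + e * D)\<bar> \<le> K * e^2"
  shows "(h has_real_derivative D) (at 0)"
    and "(\<lambda>e. h e - (h 0 + e * D)) \<in> O[at 0](\<lambda>e. e^2)"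
proof -
  have ev_at: "\<forall>\<^sub>F e in at 0. \<bar>h e - (h 0 + e * D)\<bar> \<le> K * e^2"
    unfolding eventually_at_filter by (rule eventually_mono[OF bound]) simp
  show "(\<lambda>e. h e - (h 0 + e * D)) \<in> O[at 0](\<lambda>e. e^2)"
    by (rule bigoI[where c = K], rule eventually_mono[OF ev_at]) simp
  have ev2: "\<forall>\<^sub>F y in at 0. norm ((h y - h 0)/y - D) \<le> K * \<bar>y\<bar>"
    unfolding eventually_at_filter by (rule eventually_mono[OF bound]) (auto intro!: quot_bound)
  have "((\<lambda>y. K * \<bar>y\<bar>) \<longlongrightarrow> K * \<bar>0\<bar>) (at (0::real))" by (intro tendsto_intros)
  hence "((\<lambda>y. K * \<bar>y\<bar>) \<longlongrightarrow> 0) (at (0::real))" by simp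
  from Lim_null_comparison[OF ev2 this]
  have "((\<lambda>y. (h y - h 0)/y - D) \<longlongrightarrow> 0) (at 0)" .
  hence "((\<lambda>y. (h y - h 0)/y) \<longlongrightarrow> D) (at 0)" by (rule LIM_zero_cancel)
  thus "(h has_real_derivative D) (at 0)" by (simp add: has_field_derivative_iff)
qed
lemma laplacian_sym:
  assumes "simple_adjacency A"
  shows "transpose (laplacian A) = laplacian A"
  using assms unfolding simple_adjacency_def laplacian_def
  by (simp add: vec_eq_iff transpose_def)

lemma laplacian_one:
  "laplacian A *v (\<chi> i. 1) = (0::real^'n::finite)"
proof -
  have "\<And>i. (\<Sum>j\<in>UNIV. ((if i = j then (\<Sum>k\<in>UNIV. A$i$k) else 0) - A$i$j)) = 0"
    by (simp add: sum_subtractf)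
  thus ?thesis unfolding laplacian_def by (simp add: vec_eq_iff matrix_vector_mult_def)
qed

definition wvec :: "'n::finite \<Rightarrow> 'n \<Rightarrow> real^'n" where
  "wvec p q = (\<chi> i. (if i = p then 1 else 0) - (if i = q then 1 else 0))"

lemma wvec_inner:
  fixes x :: "real^'n::finite"
  shows "(\<Sum>j\<in>UNIV. wvec p q $ j * x $ j) = x$p - x$q"
proof -
  have "(\<Sum>j\<in>UNIV. wvec p q $ j * x $ j) = (\<Sum>j\<in>UNIV. (if j = p then x$j else 0) - (if j = q then x$j else 0))"
    by (rule sum.cong) (auto simp: wvec_def)
  also have "\<dots> = x$p - x$q" by (simp add: sum_subtractf)
  finally show ?thesis .
qed

lemma pert_entry:
  assumes "p \<noteq> q"
  shows "edge_perturbation p q s $ i $ j = s * wvec p q $ i * wvec p q $ j"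
  using assms by (auto simp: edge_perturbation_def wvec_def)

lemma pert_sym:
  assumes "p \<noteq> q"
  shows "transpose (edge_perturbation p q s) = edge_perturbation p q s"
  using assms by (simp add: vec_eq_iff transpose_def pert_entry mult_ac)

lemma pert_mult:
  assumes "p \<noteq> q"
  shows "edge_perturbation p q s *v x = (s * (x$p - x$q)) *\<^sub>R wvec p q"
proof -
  have "\<And>i. (\<Sum>j\<in>UNIV. s * wvec p q $ i * wvec p q $ j * x $ j) = s * wvec p q $ i * (\<Sum>j\<in>UNIV. wvec p q $ j * x $ j)"
    by (simp add: sum_distrib_left mult_ac)
  moreover have "(\<Sum>j\<in>UNIV. x$j * wvec p q $ j) = x$p - x$q" using wvec_inner[of p q x] by (simp add: mult.commute)
  ultimately show ?thesis using assms by (simp add: vec_eq_iff matrix_vector_mult_def pert_entry mult_ac)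
qed

lemma pert_quad:
  assumes "p \<noteq> q"
  shows "(edge_perturbation p q s *v x) \<bullet> x = s * (x$p - x$q)^2"
proof -
  have "wvec p q \<bullet> x = x$p - x$q" using wvec_inner[of p q x] by (simp add: inner_vec_def)
  thus ?thesis using assms by (simp add: pert_mult power2_eq_square)
qed

lemma sym_add_scale:
  fixes L B :: "real^'n::finite^'n"
  assumes "transpose L = L" "transpose B = B"
  shows "transpose (L + e *\<^sub>R B) = L + e *\<^sub>R B"
proof -
  have "\<And>i j. L$i$j = L$j$i" "\<And>i j. B$i$j = B$j$i" using assms by (metis transpose_def vec_lambda_beta)+
  thus ?thesis by (simp add: vec_eq_iff transpose_def)
qed

theorem corollary3p13:
  fixes A :: "real^'n^'n" and p q :: 'n and s :: real
    and lam :: "'n \<Rightarrow> real" and v :: "'n \<Rightarrow> real^'n"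
  assumes adj: "simple_adjacency A"
    and pq: "p \<noteq> q"
    and sign: "(s = 1 \<and> A$p$q = 0) \<or> (s = -1 \<and> A$p$q = 1)"
    and simple0: "card (eigenvalues (laplacian A)) = CARD('n)"
    and eig: "\<And>i. laplacian A *v v i = lam i *\<^sub>R v i"
    and orth: "\<And>i j. v i \<bullet> v j = (if i = j then 1 else 0)"
    and simple_eps: "\<forall>\<^sub>F \<epsilon> in nhds 0.
          card (eigenvalues (laplacian A + \<epsilon> *\<^sub>R edge_perturbation p q s)) = CARD('n)"
  defines "h \<equiv> (\<lambda>\<epsilon>. vn_entropy (num_edges A) (laplacian A + \<epsilon> *\<^sub>R edge_perturbation p q s))"
    and "D \<equiv> - (1 / (2 * num_edges A)) * (\<Sum>i\<in>UNIV.
          s * ((v i)$p - (v i)$q)^2 * (log 2 (lam i / (2 * num_edges A)) + 1 / ln 2))"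
  shows "(h has_real_derivative D) (at 0)
       \<and> (\<lambda>\<epsilon>. h \<epsilon> - (h 0 + \<epsilon> * D)) \<in> O[at 0](\<lambda>\<epsilon>. \<epsilon>^2)"
proof -
  define L where "L = laplacian A"
  define B where "B = edge_perturbation p q s"
  define S where "S = (\<lambda>e::real. L + e *\<^sub>R B)"
  define one :: "real^'n" where "one = (\<chi> i. 1)"
  define NN where "NN = 2 * num_edges A"
  define F where "F = (\<lambda>c::real. (c / NN) * log 2 (c / NN))"
  have symL: "transpose L = L" unfolding L_def by (rule laplacian_sym[OF adj])
  have symB: "transpose B = B" unfolding B_def by (rule pert_sym[OF pq])
  have symS: "\<And>e. transpose (S e) = S e" unfolding S_def by (rule sym_add_scale[OF symL symB])
  have Lone: "L *v one = 0" unfolding L_def one_def by (rule laplacian_one)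
  have Bone: "B *v one = 0" unfolding B_def one_def using pq by (simp add: pert_mult)
  have Sone: "\<And>e. S e *v one = 0 *\<^sub>R one"
    unfolding S_def by (simp add: matrix_vector_mult_add_rdistrib scaleR_matrix_vector_assoc[symmetric] Lone Bone)
  have one_ne: "one \<noteq> 0" unfolding one_def by (simp add: vec_eq_iff)
  have eigL: "eigenvalues L = range lam"
    unfolding L_def by (rule eigenvalues_range[OF orth eig laplacian_sym[OF adj]])
  have injlam: "inj lam"
  proof -
    have "card (range lam) = card (UNIV::'n set)" using simple0 eigL unfolding L_def by simp
    thus ?thesis by (intro eq_card_imp_inj_on) auto
  qed
  have "0 \<in> eigenvalues L" unfolding eigenvalues_def using Lone one_ne by auto
  then obtain i0 where i0: "lam i0 = 0" using eigL by auto
  have eigL': "\<And>i. L *v v i = lam i *\<^sub>R v i" unfolding L_def by (rule eig)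
  have zero_pq: "\<And>i. lam i = 0 \<Longrightarrow> v i $ p = v i $ q"
  proof -
    fix i assume li: "lam i = 0"
    have "\<And>k. k \<noteq> i \<Longrightarrow> one \<bullet> v k = 0"
    proof -
      fix k assume "k \<noteq> i"
      hence lk: "lam k \<noteq> 0" using li injlam by (metis injD)
      have "(L *v one) \<bullet> v k = lam k * (one \<bullet> v k)" by (rule eig_coord[OF symL eigL'])
      thus "one \<bullet> v k = 0" using Lone lk by simp
    qed
    hence e: "one = (one \<bullet> v i) *\<^sub>R v i" by (rule orth_single[OF orth])
    have c0: "one \<bullet> v i \<noteq> 0" using one_ne e by (metis scale_zero_left)
    have "(one \<bullet> v i) * v i $ p = 1" "(one \<bullet> v i) * v i $ q = 1"
      using arg_cong[OF e, of "\<lambda>z. z $ p"] arg_cong[OF e, of "\<lambda>z. z $ q"] by (simp_all add: one_def)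
    hence "(one \<bullet> v i) * v i $ p = (one \<bullet> v i) * v i $ q" by simp
    thus "v i $ p = v i $ q" using c0 by simp
  qed
  define b where "b i j = (B *v v i) \<bullet> v j" for i j
  have bii: "\<And>i. b i i = s * (v i $ p - v i $ q)^2" unfolding b_def B_def by (rule pert_quad[OF pq])
  have b0: "\<And>i. lam i = 0 \<Longrightarrow> b i i = 0" using bii zero_pq by simp
  obtain \<delta> where dpos: "\<delta> > 0" and gap: "\<And>i j. i \<noteq> j \<Longrightarrow> \<delta> \<le> \<bar>lam i - lam j\<bar>"
  proof -
    define P where "P = {(i,j). i \<noteq> (j::'n)}"
    define G where "G = (\<lambda>(i,j). \<bar>lam i - lam j\<bar>) ` P"
    have Pne: "(p,q) \<in> P" using pq by (simp add: P_def)
    have fin: "finite G" unfolding G_def by simp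
    have Gne: "G \<noteq> {}" using Pne unfolding G_def by auto
    have Gpos: "\<And>g. g \<in> G \<Longrightarrow> g > 0" unfolding G_def P_def using injlam by (auto dest: injD)
    have "Min G > 0" using Gpos fin Gne by simp
    moreover have "\<And>i j. i \<noteq> j \<Longrightarrow> Min G \<le> \<bar>lam i - lam j\<bar>"
      using fin unfolding G_def P_def by (intro Min_le) auto
    ultimately show ?thesis using that by blast
  qed
  define y where "y i = (\<Sum>j\<in>UNIV. (b i j / (lam i - lam j)) *\<^sub>R v j)" for i
  have yv: "\<And>i k. y i \<bullet> v k = b i k / (lam i - lam k)"
  proof -
    fix i k
    have "y i \<bullet> v k = (\<Sum>j\<in>UNIV. (b i j / (lam i - lam j)) * (v j \<bullet> v k))"
      by (simp add: y_def inner_sum_left)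
    also have "\<dots> = (b i k / (lam i - lam k)) * (v k \<bullet> v k)"
      by (rule sum_single) (auto simp: orth)
    finally show "y i \<bullet> v k = b i k / (lam i - lam k)" by (simp add: orth)
  qed
  have key: "\<And>i. L *v y i - lam i *\<^sub>R y i + B *v v i - b i i *\<^sub>R v i = 0"
  proof -
    fix i
    show "L *v y i - lam i *\<^sub>R y i + B *v v i - b i i *\<^sub>R v i = 0"
    proof (rule orth_zero[OF orth])
      fix k
      have Ly: "(L *v y i) \<bullet> v k = lam k * (y i \<bullet> v k)" by (rule eig_coord[OF symL eigL'])
      have "(L *v y i - lam i *\<^sub>R y i + B *v v i - b i i *\<^sub>R v i) \<bullet> v k
            = (lam k - lam i) * (b i k / (lam i - lam k)) + b i k - b i i * (v i \<bullet> v k)"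
      proof -
        have "(L *v y i - lam i *\<^sub>R y i + B *v v i - b i i *\<^sub>R v i) \<bullet> v k
            = lam k * (y i \<bullet> v k) - lam i * (y i \<bullet> v k) + b i k - b i i * (v i \<bullet> v k)"
          by (simp add: inner_diff_left inner_add_left Ly b_def)
        also have "\<dots> = (lam k - lam i) * (y i \<bullet> v k) + b i k - b i i * (v i \<bullet> v k)"
          by (simp add: left_diff_distrib)
        finally show ?thesis by (simp only: yv)
      qed
      also have "\<dots> = 0"
      proof (cases "k = i")
        case True thus ?thesis by (simp add: orth)
      next
        case False
        hence "lam i - lam k \<noteq> 0" using injlam by (metis injD eq_iff_diff_eq_0)
        thus ?thesis using False by (simp add: orth field_simps)
      qed
      finally show "(L *v y i - lam i *\<^sub>R y i + B *v v i - b i i *\<^sub>R v i) \<bullet> v k = 0" .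
    qed
  qed
  define Cc where "Cc i = norm (B *v y i - b i i *\<^sub>R y i)" for i
  define C where "C = (\<Sum>i\<in>UNIV. Cc i)"
  have CcC: "\<And>i. Cc i \<le> C" unfolding C_def by (rule member_le_sum) (auto simp: Cc_def)
  have C0: "C \<ge> 0" unfolding C_def Cc_def by (simp add: sum_nonneg)
  define K0 where "K0 = (\<Sum>i\<in>UNIV. \<bar>b i i\<bar>)"
  have bK0: "\<And>i. \<bar>b i i\<bar> \<le> K0" unfolding K0_def by (rule member_le_sum) auto
  have K00: "K0 \<ge> 0" unfolding K0_def by (simp add: sum_nonneg)
  have resid: "\<And>i e. S e *v (v i + e *\<^sub>R y i) - (lam i + e * b i i) *\<^sub>R (v i + e *\<^sub>R y i)
                    = e^2 *\<^sub>R (B *v y i - b i i *\<^sub>R y i)"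
  proof -
    fix i e
    have Ly: "L *v y i = lam i *\<^sub>R y i - B *v v i + b i i *\<^sub>R v i"
      using key[of i] by (simp add: algebra_simps)
    show "S e *v (v i + e *\<^sub>R y i) - (lam i + e * b i i) *\<^sub>R (v i + e *\<^sub>R y i)
                    = e^2 *\<^sub>R (B *v y i - b i i *\<^sub>R y i)"
    proof -
      have "S e *v (v i + e *\<^sub>R y i) = L *v v i + e *\<^sub>R (L *v y i) + e *\<^sub>R (B *v v i) + (e*e) *\<^sub>R (B *v y i)"
        unfolding S_def
        by (simp add: matrix_vector_mult_add_rdistrib matrix_vector_right_distrib matrix_vector_mult_scaleR
          scaleR_matrix_vector_assoc[symmetric] add.assoc scaleR_add_right)
      also have "\<dots> = lam i *\<^sub>R v i + e *\<^sub>R (lam i *\<^sub>R y i - B *v v i + b i i *\<^sub>R v i) + e *\<^sub>R (B *v v i) + (e*e) *\<^sub>R (B *v y i)"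
        by (simp only: eigL' Ly)
      finally show ?thesis by (simp only: vec_id)
    qed
  qed
  have xnorm: "\<And>i e. norm (v i + e *\<^sub>R y i) \<ge> 1"
  proof -
    fix i e
    have "(v i + e *\<^sub>R y i) \<bullet> v i = 1" by (simp add: inner_add_left orth yv)
    moreover have "norm (v i) = 1" using orth[of i i] by (simp add: norm_eq_sqrt_inner)
    ultimately show "norm (v i + e *\<^sub>R y i) \<ge> 1"
      using Cauchy_Schwarz_ineq2[of "v i + e *\<^sub>R y i" "v i"] by simp
  qed
  have near: "\<And>i e (u::'n \<Rightarrow> real^'n) (m::'n \<Rightarrow> real). (\<And>i j. u i \<bullet> u j = (if i = j then 1 else 0)) \<Longrightarrow> (\<And>k. S e *v u k = m k *\<^sub>R u k)
      \<Longrightarrow> \<exists>k. \<bar>m k - (lam i + e * b i i)\<bar> \<le> e^2 * C"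
  proof -
    fix i e and u :: "'n \<Rightarrow> real^'n" and m
    assume uo: "\<And>i j. u i \<bullet> u j = (if i = j then 1 else 0)" and ue: "\<And>k. S e *v u k = m k *\<^sub>R u k"
    define x where "x = v i + e *\<^sub>R y i"
    have xn: "norm x \<ge> 1" unfolding x_def by (rule xnorm)
    hence "x \<noteq> 0" by auto
    then obtain k where k: "\<bar>m k - (lam i + e * b i i)\<bar> * norm x \<le> norm (S e *v x - (lam i + e * b i i) *\<^sub>R x)"
      using approx_eig[OF uo ue symS] by blast
    have "norm (S e *v x - (lam i + e * b i i) *\<^sub>R x) = e^2 * Cc i"
      unfolding x_def resid Cc_def by simp
    also have "\<dots> \<le> e^2 * C" using CcC by (intro mult_left_mono) auto
    finally have "\<bar>m k - (lam i + e * b i i)\<bar> * norm x \<le> e^2 * C" using k by linarith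
    moreover have "\<bar>m k - (lam i + e * b i i)\<bar> \<le> \<bar>m k - (lam i + e * b i i)\<bar> * norm x"
      using mult_left_mono[OF xn abs_ge_zero[of "m k - (lam i + e * b i i)"]] by simp
    ultimately have "\<bar>m k - (lam i + e * b i i)\<bar> \<le> e^2 * C" by linarith
    thus "\<exists>k. \<bar>m k - (lam i + e * b i i)\<bar> \<le> e^2 * C" by blast
  qed
  define d where "d = min 1 (\<delta> / (2 * (K0 + C + 1)))"
  have dpos': "d > 0" unfolding d_def using dpos K00 C0 by simp
  have ev_d: "\<forall>\<^sub>F e in nhds 0. \<bar>e\<bar> < d"
    unfolding eventually_nhds_metric using dpos' by (intro exI[of _ d]) (auto simp: dist_real_def)
  have smallclose: "\<And>e i. \<bar>e\<bar> < d \<Longrightarrow> \<bar>e * b i i\<bar> + e^2 * C < \<delta> / 2"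
  proof -
    fix e i assume ed: "\<bar>e\<bar> < d"
    have e1: "\<bar>e\<bar> \<le> 1" using ed unfolding d_def by simp
    have "e^2 \<le> \<bar>e\<bar>"
    proof -
      have "\<bar>e\<bar> * \<bar>e\<bar> \<le> \<bar>e\<bar> * 1" using e1 by (intro mult_left_mono) auto
      thus ?thesis by (simp add: power2_eq_square)
    qed
    hence "e^2 * C \<le> \<bar>e\<bar> * C" using C0 by (intro mult_right_mono)
    moreover have "\<bar>e * b i i\<bar> \<le> \<bar>e\<bar> * K0" using bK0[of i] by (simp add: abs_mult mult_left_mono)
    moreover have "\<bar>e\<bar> * (K0 + C + 1) < \<delta> / 2"
    proof -
      have "\<bar>e\<bar> < \<delta> / (2 * (K0 + C + 1))" using ed unfolding d_def by simp
      thus ?thesis using K00 C0 by (simp add: field_simps)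
    qed
    moreover have "\<bar>e\<bar> * K0 + \<bar>e\<bar> * C \<le> \<bar>e\<bar> * (K0 + C + 1)" by (simp add: algebra_simps)
    ultimately show "\<bar>e * b i i\<bar> + e^2 * C < \<delta> / 2" by linarith
  qed
  have main: "\<forall>\<^sub>F e in nhds 0. \<bar>e\<bar> < d \<and> (\<exists>\<mu>. (\<forall>i. \<bar>\<mu> i - (lam i + e * b i i)\<bar> \<le> e^2 * C)
                 \<and> (\<forall>i. lam i = 0 \<longrightarrow> \<mu> i = 0) \<and> h e = - (\<Sum>i\<in>UNIV. F (\<mu> i)))"
  proof (rule eventually_mono[OF eventually_conj[OF ev_d simple_eps]], elim conjE, intro conjI)
    fix e assume ed: "\<bar>e\<bar> < d"
      and ce: "card (eigenvalues (laplacian A + e *\<^sub>R edge_perturbation p q s)) = CARD('n)"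
    show "\<bar>e\<bar> < d" by (rule ed)
    have ce': "card (eigenvalues (S e)) = CARD('n)" using ce unfolding S_def L_def B_def .
    obtain u :: "'n \<Rightarrow> real^'n" and m :: "'n \<Rightarrow> real" where uo: "\<And>i j. u i \<bullet> u j = (if i = j then 1 else 0)"
      and ue: "\<And>k. S e *v u k = m k *\<^sub>R u k" and um: "inj m"
      using eigbasis[OF symS ce'] by blast
    have "\<forall>i. \<exists>k. \<bar>m k - (lam i + e * b i i)\<bar> \<le> e^2 * C"
    proof
      fix i show "\<exists>k. \<bar>m k - (lam i + e * b i i)\<bar> \<le> e^2 * C"
        by (rule near[where u=u and m=m and e=e and i=i]) (rule uo, rule ue)
    qed
    from choice[OF this] obtain \<kappa> where \<kappa>: "\<And>i. \<bar>m (\<kappa> i) - (lam i + e * b i i)\<bar> \<le> e^2 * C" by blast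
    define \<mu> where "\<mu> = m \<circ> \<kappa>"
    have close: "\<And>i. \<bar>\<mu> i - lam i\<bar> < \<delta> / 2"
    proof -
      fix i
      have "\<bar>\<mu> i - lam i\<bar> \<le> \<bar>e * b i i\<bar> + e^2 * C" using \<kappa>[of i] unfolding \<mu>_def by simp
      thus "\<bar>\<mu> i - lam i\<bar> < \<delta> / 2" using smallclose[OF ed, of i] by linarith
    qed
    have inj\<kappa>: "inj \<kappa>"
    proof (rule injI, rule ccontr)
      fix i j assume eq: "\<kappa> i = \<kappa> j" and ne: "i \<noteq> j"
      have "\<mu> i = \<mu> j" unfolding \<mu>_def using eq by simp
      hence "\<bar>lam i - lam j\<bar> < \<delta>" using close[of i] close[of j] by linarith
      thus False using gap[OF ne] by linarith
    qed
    have surj\<kappa>: "surj \<kappa>" using inj\<kappa> by (simp add: finite_UNIV_inj_surj)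
    have inj\<mu>: "inj \<mu>" unfolding \<mu>_def using um inj\<kappa> by (simp add: inj_compose)
    have rng: "eigenvalues (S e) = range \<mu>"
    proof -
      have "range \<mu> = m ` range \<kappa>" unfolding \<mu>_def by (rule image_comp[symmetric])
      also have "range \<kappa> = UNIV" using surj\<kappa> by simp
      finally show ?thesis using eigenvalues_range[OF uo ue symS] by simp
    qed
    show "\<exists>\<mu>. (\<forall>i. \<bar>\<mu> i - (lam i + e * b i i)\<bar> \<le> e^2 * C)
                 \<and> (\<forall>i. lam i = 0 \<longrightarrow> \<mu> i = 0) \<and> h e = - (\<Sum>i\<in>UNIV. F (\<mu> i))"
    proof (intro exI[of _ \<mu>] conjI allI impI)
      fix i show "\<bar>\<mu> i - (lam i + e * b i i)\<bar> \<le> e^2 * C" using \<kappa>[of i] unfolding \<mu>_def by simp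
    next
      fix i assume li: "lam i = 0"
      have "0 \<in> eigenvalues (S e)" unfolding eigenvalues_def using Sone one_ne by auto
      then obtain j where j: "\<mu> j = 0" using rng by auto
      have "\<bar>lam j\<bar> < \<delta> / 2" using close[of j] j by simp
      hence "j = i" using gap[of j i] li dpos by (cases "j = i") auto
      thus "\<mu> i = 0" using j by simp
    next
      have dim1: "\<And>c. c \<in> range \<mu> \<Longrightarrow> dim (eigenspace (S e) c) = 1"
      proof -
        fix c assume "c \<in> range \<mu>"
        then obtain i where "c = m (\<kappa> i)" unfolding \<mu>_def by auto
        thus "dim (eigenspace (S e) c) = 1" using eigenspace_dim[OF uo ue symS um] by simp
      qed
      have "h e = - (\<Sum>c\<in>eigenvalues (S e). real (dim (eigenspace (S e) c)) * F c)"
        unfolding h_def vn_entropy_def S_def L_def B_def F_def NN_def by simp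
      also have "\<dots> = - (\<Sum>c\<in>range \<mu>. F c)" unfolding rng by (simp add: dim1)
      also have "\<dots> = - (\<Sum>i\<in>UNIV. F (\<mu> i))" by (simp add: sum.reindex[OF inj\<mu>])
      finally show "h e = - (\<Sum>i\<in>UNIV. F (\<mu> i))" .
    qed
  qed
  define G where "G i = (1/NN) * (log 2 (lam i / NN) + 1 / ln 2)" for i
  define Ki where "Ki i = (\<bar>1/NN\<bar> / ln 2 / \<bar>lam i\<bar>) * (\<bar>b i i\<bar> + C)^2 + \<bar>G i\<bar> * C" for i
  define K where "K = (\<Sum>i\<in>UNIV. Ki i)"
  have Ki0: "\<And>i. Ki i \<ge> 0" unfolding Ki_def using C0 by (intro add_nonneg_nonneg mult_nonneg_nonneg) auto
  have Dexp: "D = - (\<Sum>i\<in>UNIV. b i i * G i)"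
    unfolding D_def G_def NN_def bii by (simp add: sum_distrib_left sum_negf mult_ac)
  have h0: "h 0 = - (\<Sum>i\<in>UNIV. F (lam i))"
  proof -
    from eventually_nhds_x_imp_x[OF main]
    obtain \<mu> where \<mu>1: "\<forall>i. \<bar>\<mu> i - (lam i + 0 * b i i)\<bar> \<le> 0^2 * C"
      and he: "h 0 = - (\<Sum>i\<in>UNIV. F (\<mu> i))" by blast
    have "\<And>i. \<mu> i = lam i" using \<mu>1 by auto
    thus ?thesis using he by simp
  qed
  have bound: "\<forall>\<^sub>F e in nhds 0. \<bar>h e - (h 0 + e * D)\<bar> \<le> K * e^2"
  proof (rule eventually_mono[OF main], elim conjE exE)
    fix e \<mu> assume ed: "\<bar>e\<bar> < d" and \<mu>1: "\<forall>i. \<bar>\<mu> i - (lam i + e * b i i)\<bar> \<le> e^2 * C"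
      and \<mu>0: "\<forall>i. lam i = 0 \<longrightarrow> \<mu> i = 0" and he: "h e = - (\<Sum>i\<in>UNIV. F (\<mu> i))"
    have e1: "\<bar>e\<bar> \<le> 1" using ed unfolding d_def by simp
    have e2: "e^2 \<le> \<bar>e\<bar>"
    proof -
      have "\<bar>e\<bar> * \<bar>e\<bar> \<le> \<bar>e\<bar> * 1" using e1 by (intro mult_left_mono) auto
      thus ?thesis by (simp add: power2_eq_square)
    qed
    have Ei: "\<And>i. \<bar>F (\<mu> i) - F (lam i) - e * b i i * G i\<bar> \<le> Ki i * e^2"
    proof -
      fix i
      show "\<bar>F (\<mu> i) - F (lam i) - e * b i i * G i\<bar> \<le> Ki i * e^2"
      proof (cases "lam i = 0")
        case True
        hence "\<mu> i = 0" "b i i = 0" using \<mu>0 b0 by auto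
        thus ?thesis using True Ki0[of i] by simp
      next
        case False
        have "i \<noteq> i0" using False i0 by auto
        hence li: "\<delta> \<le> \<bar>lam i\<bar>" using gap[of i i0] i0 by simp
        have mb: "\<bar>\<mu> i - lam i - e * b i i\<bar> \<le> e^2 * C" using \<mu>1 by (simp add: algebra_simps)
        have m1: "\<bar>\<mu> i - lam i\<bar> \<le> \<bar>e * b i i\<bar> + e^2 * C" using mb by linarith
        have mcl: "\<bar>\<mu> i - lam i\<bar> < \<bar>lam i\<bar>" using m1 smallclose[OF ed, of i] li dpos by linarith
        have md: "\<bar>\<mu> i - lam i\<bar> \<le> (\<bar>b i i\<bar> + C) * \<bar>e\<bar>"
        proof -
          have "e^2 * C \<le> \<bar>e\<bar> * C" using e2 C0 by (intro mult_right_mono)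
          thus ?thesis using m1 by (simp add: abs_mult algebra_simps)
        qed
        have sq: "(\<mu> i - lam i)^2 \<le> (\<bar>b i i\<bar> + C)^2 * e^2"
        proof -
          have "\<bar>\<mu> i - lam i\<bar>^2 \<le> ((\<bar>b i i\<bar> + C) * \<bar>e\<bar>)^2" using md by (intro power_mono) auto
          thus ?thesis by (simp add: power_mult_distrib)
        qed
        have T: "\<bar>F (\<mu> i) - F (lam i) - G i * (\<mu> i - lam i)\<bar> \<le> (\<bar>1/NN\<bar> / ln 2 / \<bar>lam i\<bar>) * (\<mu> i - lam i)^2"
          using xlogx_taylor[OF False mcl, of NN] unfolding F_def G_def by simp
        have split: "F (\<mu> i) - F (lam i) - e * b i i * G i
            = (F (\<mu> i) - F (lam i) - G i * (\<mu> i - lam i)) + G i * (\<mu> i - lam i - e * b i i)"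
          by (simp add: algebra_simps)
        have c0: "\<bar>1/NN\<bar> / ln 2 / \<bar>lam i\<bar> \<ge> 0" by simp
        have "\<bar>F (\<mu> i) - F (lam i) - e * b i i * G i\<bar>
            \<le> \<bar>F (\<mu> i) - F (lam i) - G i * (\<mu> i - lam i)\<bar> + \<bar>G i\<bar> * \<bar>\<mu> i - lam i - e * b i i\<bar>"
          unfolding split by (metis abs_mult abs_triangle_ineq)
        also have "\<dots> \<le> (\<bar>1/NN\<bar> / ln 2 / \<bar>lam i\<bar>) * ((\<bar>b i i\<bar> + C)^2 * e^2) + \<bar>G i\<bar> * (e^2 * C)"
          using T mult_left_mono[OF sq c0] mult_left_mono[OF mb abs_ge_zero[of "G i"]] by linarith
        also have "\<dots> = Ki i * e^2" unfolding Ki_def by (simp add: algebra_simps)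
        finally show ?thesis .
      qed
    qed
    have "h e - (h 0 + e * D) = - (\<Sum>i\<in>UNIV. F (\<mu> i) - F (lam i) - e * b i i * G i)"
      unfolding he h0 Dexp by (simp add: sum_subtractf sum.distrib sum_distrib_left algebra_simps)
    hence "\<bar>h e - (h 0 + e * D)\<bar> = \<bar>\<Sum>i\<in>UNIV. F (\<mu> i) - F (lam i) - e * b i i * G i\<bar>" by simp
    also have "\<dots> \<le> (\<Sum>i\<in>UNIV. \<bar>F (\<mu> i) - F (lam i) - e * b i i * G i\<bar>)" by (rule sum_abs)
    also have "\<dots> \<le> (\<Sum>i\<in>UNIV. Ki i * e^2)" by (rule sum_mono) (rule Ei)
    also have "\<dots> = K * e^2" unfolding K_def by (simp add: sum_distrib_right)
    finally show "\<bar>h e - (h 0 + e * D)\<bar> \<le> K * e^2" .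
  qed
  show ?thesis by (rule conjI[OF deriv_from_bound(1)[OF bound] deriv_from_bound(2)[OF bound]])
qed
end
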